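(* Let $d:\mathcal{A}\to A$ be any derivation with Fourier components $d_n$. Then for every $a\in\mathcal{A}$ and every finitely supported $x\in c_{00}(\mathbb{Z}_{\ge0})\subseteq\ell^2(\mathbb{Z}_{\ge0})$, the series $\sum_{n\in\mathbb{Z}}d_n(a)x$ converges in $\ell^2(\mathbb{Z}_{\ge0})$ and $\sum_{n\in\mathbb{Z}}d_n(a)x=d(a)x$.
   Context: Setup: $G$ is an infinite compact (Hausdorff) abelian group, written additively, and $x_1\in G$ generates a dense cyclic subgroup; $x_n=nx_1$. $\widehat G$ is the group of continuous characters. Let $H_+=\ell^2(\mathbb{Z}_{\ge 0})$ with canonical basis $\{E_k^+\}$; $UE_k^+=E_{k+1}^+$, $M^+_fE^+_k=f(x_k)E^+_k$, $\mathbb{K}E_k^+=kE_k^+$. $A=C^*(U,M^+_f:f\in C(G))$, $\mathcal{A}$ is the $*$-subalgebra generated by $U,U^*,M^+_\chi$ ($\chi\in\widehat G$). For $\theta\in\mathbb{R}$, $\rho_\theta(a)=e^{i\theta\mathbb{K}}ae^{-i\theta\mathbb{K}}$. The $n$-th Fourier component of a derivation $d:\mathcal A\to A$ is $d_n(a)=\frac{1}{2\pi}\int_0^{2\pi}e^{in\theta}\rho_\theta^{-1}\big(d(\rho_\theta(a))\big)\,d\theta$. *)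

theory Defs
  imports "HOL-Analysis.Analysis"
begin

type_synonym vec = "nat \<Rightarrow> complex"
type_synonym op = "vec \<Rightarrow> vec"

definition gmul :: "nat \<Rightarrow> 'g::ab_group_add \<Rightarrow> 'g" where
  "gmul n x = (((+) x) ^^ n) 0"

definition zmul :: "int \<Rightarrow> 'g::ab_group_add \<Rightarrow> 'g" where
  "zmul k x = (if k \<ge> 0 then gmul (nat k) x else - gmul (nat (-k)) x)"

definition characters :: "('g::{topological_ab_group_add,t2_space} \<Rightarrow> complex) set" where
  "characters = {chi. continuous_on UNIV chi \<and> (\<forall>a b. chi (a + b) = chi a * chi b)
                     \<and> (\<forall>a. cmod (chi a) = 1)}"

definition l2 :: "vec \<Rightarrow> bool" where
  "l2 v \<longleftrightarrow> summable (\<lambda>k. (cmod (v k))\<^sup>2)"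

definition l2norm :: "vec \<Rightarrow> real" where
  "l2norm v = sqrt (\<Sum>k. (cmod (v k))\<^sup>2)"

definition fin_supp :: "vec \<Rightarrow> bool" where
  "fin_supp v \<longleftrightarrow> finite {k. v k \<noteq> 0}"

definition shiftU :: op where
  "shiftU v = (\<lambda>k. if k = 0 then 0 else v (k - 1))"

definition shiftUadj :: op where
  "shiftUadj v = (\<lambda>k. v (Suc k))"

definition multM :: "'g::ab_group_add \<Rightarrow> ('g \<Rightarrow> complex) \<Rightarrow> op" where
  "multM x1 f v = (\<lambda>k. f (gmul k x1) * v k)"

text \<open>\<open>expK \<theta> = e^{i \<theta> K}\<close>, \<open>K E_k = k E_k\<close>.\<close>
definition expK :: "real \<Rightarrow> op" where
  "expK \<theta> v = (\<lambda>k. exp (\<i> * of_real (\<theta> * real k)) * v k)"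

definition rho :: "real \<Rightarrow> op \<Rightarrow> op" where
  "rho \<theta> a = expK \<theta> \<circ> a \<circ> expK (-\<theta>)"

inductive_set alg_gen :: "op set \<Rightarrow> op set" for S :: "op set" where
  gen: "a \<in> S \<Longrightarrow> a \<in> alg_gen S"
| add: "a \<in> alg_gen S \<Longrightarrow> b \<in> alg_gen S \<Longrightarrow> (\<lambda>v k. a v k + b v k) \<in> alg_gen S"
| smult: "a \<in> alg_gen S \<Longrightarrow> (\<lambda>v k. c * a v k) \<in> alg_gen S"
| mult: "a \<in> alg_gen S \<Longrightarrow> b \<in> alg_gen S \<Longrightarrow> a \<circ> b \<in> alg_gen S"

definition Acal :: "'g::{topological_ab_group_add,t2_space} \<Rightarrow> op set" where
  "Acal x1 = alg_gen ({shiftU, shiftUadj} \<union> multM x1 ` characters)"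

definition bounded_op :: "op \<Rightarrow> bool" where
  "bounded_op T \<longleftrightarrow> (\<forall>v. l2 v \<longrightarrow> l2 (T v)) \<and>
     (\<exists>C. \<forall>v. l2 v \<longrightarrow> l2norm (T v) \<le> C * l2norm v)"

text \<open>A = C^*(U, M_f : f in C(G)): the operator-norm closure of the *-algebra generated by
  U, U^*, M_f (this algebra is already *-closed since M_f^* = M_{conj f}).
  Operators are compared on l2 only.\<close>
definition Aalg :: "'g::{topological_ab_group_add,t2_space} \<Rightarrow> op set" where
  "Aalg x1 = {T. bounded_op T \<and>
     (\<forall>\<epsilon>>0. \<exists>S\<in>alg_gen ({shiftU, shiftUadj} \<union> multM x1 ` {f. continuous_on UNIV f}).
        \<forall>v. l2 v \<longrightarrow> l2norm (\<lambda>k. T v k - S v k) \<le> \<epsilon> * l2norm v)}"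

definition is_derivation :: "'g::{topological_ab_group_add,t2_space} \<Rightarrow> (op \<Rightarrow> op) \<Rightarrow> bool" where
  "is_derivation x1 d \<longleftrightarrow>
     (\<forall>a\<in>Acal x1. d a \<in> Aalg x1) \<and>
     (\<forall>a\<in>Acal x1. \<forall>b\<in>Acal x1. \<forall>v. l2 v \<longrightarrow>
         d (\<lambda>w k. a w k + b w k) v = (\<lambda>k. d a v k + d b v k)) \<and>
     (\<forall>a\<in>Acal x1. \<forall>c. \<forall>v. l2 v \<longrightarrow>
         d (\<lambda>w k. c * a w k) v = (\<lambda>k. c * d a v k)) \<and>
     (\<forall>a\<in>Acal x1. \<forall>b\<in>Acal x1. \<forall>v. l2 v \<longrightarrow>
         d (a \<circ> b) v = (\<lambda>k. a (d b v) k + d a (b v) k))"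

text \<open>n-th Fourier component
  \<open>d_n(a) = 1/(2\<pi>) \<integral>_0^{2\<pi>} e^{in\<theta>} \<rho>_\<theta>^{-1}(d(\<rho>_\<theta>(a))) d\<theta>\<close>,
  applied to a vector x, computed coordinatewise (\<open>\<rho>_\<theta>^{-1} = \<rho>_{-\<theta>}\<close>).\<close>
definition fourier_comp :: "(op \<Rightarrow> op) \<Rightarrow> int \<Rightarrow> op \<Rightarrow> op" where
  "fourier_comp d n a x = (\<lambda>k. complex_of_real (1 / (2 * pi)) *
      integral {0..2*pi} (\<lambda>\<theta>. exp (\<i> * of_real (real_of_int n * \<theta>)) * rho (-\<theta>) (d (rho \<theta> a)) x k))"

end

theory Submission
  imports Defs
begin

definition linop :: "op \<Rightarrow> bool" where
  "linop b \<longleftrightarrow> (\<forall>v w. b (\<lambda>k. v k + w k) = (\<lambda>k. b v k + b w k)) \<and>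
     (\<forall>c v. b (\<lambda>k. c * v k) = (\<lambda>k. c * b v k))"

lemma linop_add: "linop b \<Longrightarrow> b (\<lambda>k. v k + w k) = (\<lambda>k. b v k + b w k)"
  by (simp add: linop_def)
lemma linop_smult: "linop b \<Longrightarrow> b (\<lambda>k. c * v k) = (\<lambda>k. c * b v k)"
  by (simp add: linop_def)
lemma linop_zero: "linop b \<Longrightarrow> b (\<lambda>k. 0) = (\<lambda>k. 0)"
  using linop_smult[of b 0 "\<lambda>k. 0"] by simp

lemma alg_gen_linop:
  assumes "\<And>s. s \<in> S \<Longrightarrow> linop s" "a \<in> alg_gen S" shows "linop a"
  using assms(2)
proof induction
  case (gen a) then show ?case using assms(1) by blast
next
  case (add a b) then show ?case by (simp add: linop_def algebra_simps)
next
  case (smult a c) then show ?case by (simp add: linop_def algebra_simps)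
next
  case (mult a b) then show ?case by (simp add: linop_def)
qed

lemma linop_sum_list: "linop b \<Longrightarrow> b (\<lambda>k. \<Sum>q\<leftarrow>L. f q k) = (\<lambda>k. \<Sum>q\<leftarrow>L. b (f q) k)"
proof (induction L)
  case Nil then show ?case using linop_zero by simp
next
  case (Cons a L)
  have "b (\<lambda>k. \<Sum>q\<leftarrow>a # L. f q k) = b (\<lambda>k. f a k + (\<Sum>q\<leftarrow>L. f q k))" by simp
  also have "\<dots> = (\<lambda>k. b (f a) k + b (\<lambda>k. \<Sum>q\<leftarrow>L. f q k) k)"
    using linop_add[OF Cons.prems, of "f a" "\<lambda>k. \<Sum>q\<leftarrow>L. f q k"] by simp
  finally show ?case using Cons by simp
qed

lemma linop_shiftU: "linop shiftU" unfolding linop_def shiftU_def by (simp add: fun_eq_iff)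
lemma linop_shiftUadj: "linop shiftUadj" unfolding linop_def shiftUadj_def by simp
lemma linop_multM: "linop (multM x1 f)" unfolding linop_def multM_def by (simp add: algebra_simps)

definition hom :: "int \<Rightarrow> op \<Rightarrow> bool" where
  "hom m b \<longleftrightarrow> (\<forall>\<theta>. rho \<theta> b = (\<lambda>v k. exp (\<i> * of_real (of_int m * \<theta>)) * b v k))"

lemma expK_inv: "expK (-\<theta>) (expK \<theta> v) = v"
  by (simp add: expK_def exp_add[symmetric] fun_eq_iff)
lemma expK_inv': "expK \<theta> (expK (-\<theta>) v) = v"
  by (simp add: expK_def exp_add[symmetric] fun_eq_iff)

lemma hom_shiftU: "hom 1 shiftU"
proof -
  have "exp (\<i> * of_real (\<theta> * real k)) * exp (\<i> * of_real (-\<theta> * real (k - 1))) = exp (\<i> * of_real \<theta>)"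
    if "k \<noteq> 0" for \<theta> k
  proof -
    have "\<i> * of_real (\<theta> * real k) + \<i> * of_real (-\<theta> * real (k - 1)) = \<i> * of_real \<theta>"
      using that by (simp add: of_nat_diff algebra_simps)
    then show ?thesis by (simp add: exp_add[symmetric])
  qed
  then show ?thesis
    by (auto simp: hom_def rho_def expK_def shiftU_def fun_eq_iff)
qed

lemma hom_shiftUadj: "hom (-1) shiftUadj"
proof -
  have "exp (\<i> * of_real (\<theta> * real k)) * exp (\<i> * of_real (-\<theta> * real (Suc k))) = exp (\<i> * of_real (-\<theta>))"
    for \<theta> k
  proof -
    have "\<i> * of_real (\<theta> * real k) + \<i> * of_real (-\<theta> * real (Suc k)) = \<i> * of_real (-\<theta>)"
      by (simp add: algebra_simps)
    then show ?thesis by (simp add: exp_add[symmetric])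
  qed
  then show ?thesis
    by (auto simp: hom_def rho_def expK_def shiftUadj_def fun_eq_iff)
qed

lemma hom_multM: "hom 0 (multM x1 f)"
proof -
  have "exp (\<i> * of_real (\<theta> * real k)) * (f (gmul k x1) * (exp (\<i> * of_real (-\<theta> * real k)) * v k)) = f (gmul k x1) * v k"
    for \<theta> k v
  proof -
    have "exp (\<i> * of_real (\<theta> * real k)) * exp (\<i> * of_real (-\<theta> * real k)) = 1"
      by (simp add: exp_add[symmetric])
    then show ?thesis by (metis (no_types, lifting) mult.assoc mult.commute mult.right_neutral)
  qed
  then show ?thesis
    by (auto simp: hom_def rho_def expK_def multM_def fun_eq_iff)
qed

lemma rho_comp: "rho \<theta> (b \<circ> c) = rho \<theta> b \<circ> rho \<theta> c"
  unfolding rho_def comp_def by (simp add: expK_inv)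

lemma hom_comp:
  assumes "hom m b" "hom l c" "linop b" shows "hom (m + l) (b \<circ> c)"
  unfolding hom_def
proof
  fix \<theta>
  have "rho \<theta> (b \<circ> c) v k = exp (\<i> * of_real (of_int (m+l) * \<theta>)) * b (c v) k" for v k
  proof -
    have "rho \<theta> (b \<circ> c) v k = rho \<theta> b (rho \<theta> c v) k" by (simp add: rho_comp)
    also have "\<dots> = exp (\<i> * of_real (of_int m * \<theta>)) * (exp (\<i> * of_real (of_int l * \<theta>)) * b (c v) k)"
    proof -
      have hc: "rho \<theta> c v = (\<lambda>k. exp (\<i> * of_real (of_int l * \<theta>)) * c v k)"
        using assms(2) unfolding hom_def by metis
      have hb: "rho \<theta> b w = (\<lambda>k. exp (\<i> * of_real (of_int m * \<theta>)) * b w k)" for w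
        using assms(1) unfolding hom_def by metis
      show ?thesis unfolding hc hb linop_smult[OF assms(3)] by simp
    qed
    also have "\<dots> = exp (\<i> * of_real (of_int (m+l) * \<theta>)) * b (c v) k"
    proof -
      have "\<i> * of_real (of_int (m+l) * \<theta>) = \<i> * of_real (of_int m * \<theta>) + \<i> * of_real (of_int l * \<theta>)"
        by (simp add: algebra_simps)
      then show ?thesis by (simp add: exp_add mult.assoc)
    qed
    finally show ?thesis .
  qed
  then show "rho \<theta> (b \<circ> c) = (\<lambda>v k. exp (\<i> * of_real (of_int (m+l) * \<theta>)) * (b \<circ> c) v k)"
    by (simp add: fun_eq_iff)
qed

lemma hom_smult: "hom m b \<Longrightarrow> hom m (\<lambda>v k. c * b v k)"
  unfolding hom_def rho_def comp_def
proof (intro allI)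
  fix \<theta> assume h: "\<forall>\<theta>. (\<lambda>x. expK \<theta> (b (expK (- \<theta>) x))) = (\<lambda>v k. exp (\<i> * of_real (of_int m * \<theta>)) * b v k)"
  have "expK \<theta> (\<lambda>k. c * b (expK (- \<theta>) v) k) = (\<lambda>k. c * expK \<theta> (b (expK (- \<theta>) v)) k)" for v
    by (simp add: expK_def fun_eq_iff mult.left_commute)
  also have "\<dots> v = (\<lambda>k. c * (exp (\<i> * of_real (of_int m * \<theta>)) * b v k))" for v
    using fun_cong[OF spec[OF h, of \<theta>], of v] by simp
  finally show "(\<lambda>x. expK \<theta> (\<lambda>k. c * b (expK (- \<theta>) x) k)) = (\<lambda>v k. exp (\<i> * of_real (of_int m * \<theta>)) * (c * b v k))"
    by (simp add: fun_eq_iff mult.left_commute)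
qed

lemma sum_list_compr: "(\<Sum>r\<leftarrow>[g p q. p\<leftarrow>xs, q\<leftarrow>ys]. f r) = (\<Sum>p\<leftarrow>xs. \<Sum>q\<leftarrow>ys. f (g p q))"
  by (induction xs) (auto simp: comp_def)

lemma decomp:
  assumes lin: "\<And>s. s \<in> S \<Longrightarrow> linop s" and deg: "\<And>s. s \<in> S \<Longrightarrow> \<exists>m. hom m s"
    and "a \<in> alg_gen S"
  shows "\<exists>L. (\<forall>p\<in>set L. snd p \<in> alg_gen S \<and> hom (fst p) (snd p)) \<and> a = (\<lambda>v k. \<Sum>p\<leftarrow>L. snd p v k)"
  using assms(3)
proof induction
  case (gen a)
  then obtain m where "hom m a" using deg by blast
  then show ?case using gen by (intro exI[of _ "[(m,a)]"]) (auto intro: alg_gen.gen)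
next
  case (add a b)
  then obtain L1 L2 where "\<forall>p\<in>set L1. snd p \<in> alg_gen S \<and> hom (fst p) (snd p)" "a = (\<lambda>v k. \<Sum>p\<leftarrow>L1. snd p v k)"
    "\<forall>p\<in>set L2. snd p \<in> alg_gen S \<and> hom (fst p) (snd p)" "b = (\<lambda>v k. \<Sum>p\<leftarrow>L2. snd p v k)" by blast
  then show ?case by (intro exI[of _ "L1 @ L2"]) auto
next
  case (smult a c)
  then obtain L1 where L1: "\<forall>p\<in>set L1. snd p \<in> alg_gen S \<and> hom (fst p) (snd p)" "a = (\<lambda>v k. \<Sum>p\<leftarrow>L1. snd p v k)"
    by blast
  let ?L = "map (\<lambda>p. (fst p, \<lambda>v k. c * snd p v k)) L1"
  have "(\<lambda>v k. c * a v k) = (\<lambda>v k. \<Sum>p\<leftarrow>?L. snd p v k)"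
    using L1(2) by (simp add: fun_eq_iff sum_list_const_mult[symmetric] comp_def)
  moreover have "\<forall>p\<in>set ?L. snd p \<in> alg_gen S \<and> hom (fst p) (snd p)"
    using L1(1) by (auto intro: alg_gen.smult hom_smult)
  ultimately show ?case by blast
next
  case (mult a b)
  then obtain L1 L2 where L: "\<forall>p\<in>set L1. snd p \<in> alg_gen S \<and> hom (fst p) (snd p)" "a = (\<lambda>v k. \<Sum>p\<leftarrow>L1. snd p v k)"
    "\<forall>p\<in>set L2. snd p \<in> alg_gen S \<and> hom (fst p) (snd p)" "b = (\<lambda>v k. \<Sum>p\<leftarrow>L2. snd p v k)" by blast
  let ?L = "[(fst p + fst q, snd p \<circ> snd q). p\<leftarrow>L1, q\<leftarrow>L2]"
  have "(a \<circ> b) v k = (\<Sum>r\<leftarrow>?L. snd r v k)" for v k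
  proof -
    have "(a \<circ> b) v k = (\<Sum>p\<leftarrow>L1. snd p (\<lambda>k. \<Sum>q\<leftarrow>L2. snd q v k) k)" using L by simp
    also have "\<dots> = (\<Sum>p\<leftarrow>L1. \<Sum>q\<leftarrow>L2. snd p (snd q v) k)"
    proof (rule arg_cong[where f=sum_list], rule map_cong[OF refl])
      fix p assume "p \<in> set L1"
      then have "linop (snd p)" using L(1) alg_gen_linop[OF lin] by blast
      then show "snd p (\<lambda>k. \<Sum>q\<leftarrow>L2. snd q v k) k = (\<Sum>q\<leftarrow>L2. snd p (snd q v) k)"
        using linop_sum_list[where b="snd p" and L=L2 and f="\<lambda>q. snd q v"] by simp
    qed
    finally show ?thesis by (simp add: sum_list_compr)
  qed
  moreover have "\<forall>r\<in>set ?L. snd r \<in> alg_gen S \<and> hom (fst r) (snd r)"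
  proof
    fix r assume "r \<in> set ?L"
    then obtain p q where pq: "p \<in> set L1" "q \<in> set L2" "r = (fst p + fst q, snd p \<circ> snd q)" by auto
    have "linop (snd p)" using pq L(1) alg_gen_linop[OF lin] by blast
    then show "snd r \<in> alg_gen S \<and> hom (fst r) (snd r)"
      using pq L(1,3) by (auto intro: alg_gen.mult hom_comp)
  qed
  ultimately show ?case by (intro exI[of _ ?L]) (auto simp: fun_eq_iff)
qed

lemma l2norm_nonneg: "l2 v \<Longrightarrow> 0 \<le> l2norm v"
  unfolding l2norm_def l2_def by (intro real_sqrt_ge_zero suminf_nonneg) auto

lemma l2_coord: assumes "l2 z" shows "cmod (z k) \<le> l2norm z"
proof -
  have "(\<Sum>j\<in>{k}. (cmod (z j))\<^sup>2) \<le> (\<Sum>j. (cmod (z j))\<^sup>2)"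
    using assms unfolding l2_def by (intro sum_le_suminf) auto
  then show ?thesis unfolding l2norm_def by (intro real_le_rsqrt) simp
qed

lemma sq_bound: "(x + y)\<^sup>2 \<le> 2 * x\<^sup>2 + 2 * (y::real)\<^sup>2"
proof -
  have "0 \<le> (x - y)\<^sup>2" by simp
  then show ?thesis unfolding power2_sum power2_diff by linarith
qed

lemma l2_add: assumes "l2 v" "l2 w" shows "l2 (\<lambda>k. v k + w k)"
proof -
  have h1: "norm ((cmod (v k + w k))\<^sup>2) \<le> 2 * (cmod (v k))\<^sup>2 + 2 * (cmod (w k))\<^sup>2" for k
  proof -
    have a: "cmod (v k + w k) \<le> cmod (v k) + cmod (w k)" by (rule norm_triangle_ineq)
    have "(cmod (v k + w k))\<^sup>2 \<le> (cmod (v k) + cmod (w k))\<^sup>2"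
      by (rule power_mono[OF a norm_ge_zero])
    also have "\<dots> \<le> 2 * (cmod (v k))\<^sup>2 + 2 * (cmod (w k))\<^sup>2"
      by (rule sq_bound)
    finally show ?thesis by (simp only: real_norm_def abs_power2)
  qed
  have h2: "summable (\<lambda>k. 2 * (cmod (v k))\<^sup>2 + 2 * (cmod (w k))\<^sup>2)"
    using summable_add[OF summable_mult[OF assms(1)[unfolded l2_def]] summable_mult[OF assms(2)[unfolded l2_def]]] .
  show ?thesis unfolding l2_def
    by (rule summable_comparison_test'[OF h2 h1])
qed

lemma l2_smult: assumes "l2 v" shows "l2 (\<lambda>k. c * v k)"
  using assms summable_mult[of "\<lambda>k. (cmod (v k))\<^sup>2" "(cmod c)\<^sup>2"]
  unfolding l2_def by (simp add: norm_mult power_mult_distrib)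

lemma l2_diff: assumes "l2 v" "l2 w" shows "l2 (\<lambda>k. v k - w k)"
  using l2_add[OF assms(1) l2_smult[OF assms(2), of "-1"]] by simp

lemma l2_shiftU: "l2 v \<Longrightarrow> l2 (shiftU v)"
  unfolding l2_def shiftU_def
  by (subst summable_Suc_iff[symmetric]) simp

lemma l2_shiftUadj: "l2 v \<Longrightarrow> l2 (shiftUadj v)"
  unfolding l2_def shiftUadj_def
  by (subst (asm) summable_Suc_iff[symmetric]) simp

lemma l2_multM:
  assumes "\<And>y. cmod (f y) \<le> B" "l2 v" shows "l2 (multM x1 f v)"
proof -
  have h1: "norm ((cmod (f (gmul k x1) * v k))\<^sup>2) \<le> B\<^sup>2 * (cmod (v k))\<^sup>2" for k
  proof -
    have "cmod (f (gmul k x1) * v k) \<le> B * cmod (v k)"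
      using assms(1) by (simp add: norm_mult mult_right_mono)
    then have "(cmod (f (gmul k x1) * v k))\<^sup>2 \<le> (B * cmod (v k))\<^sup>2"
      by (simp add: power_mono)
    then show ?thesis by (simp add: power_mult_distrib)
  qed
  have h2: "summable (\<lambda>k. B\<^sup>2 * (cmod (v k))\<^sup>2)"
    using assms(2) unfolding l2_def by (rule summable_mult)
  show ?thesis unfolding l2_def multM_def
    by (rule summable_comparison_test'[OF h2 h1])
qed

lemma cont_bounded:
  assumes "compact (UNIV :: 'g::topological_space set)" "continuous_on UNIV (f :: 'g \<Rightarrow> complex)"
  shows "\<exists>B. \<forall>y. cmod (f y) \<le> B"
proof -
  have "compact (f ` UNIV)" using assms compact_continuous_image by blast
  then have "bounded (f ` UNIV)" by (rule compact_imp_bounded)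
  then show ?thesis unfolding bounded_iff by auto
qed

lemma alg_gen_l2:
  assumes "\<And>s v. s \<in> S \<Longrightarrow> l2 v \<Longrightarrow> l2 (s v)" "a \<in> alg_gen S" "l2 v"
  shows "l2 (a v)"
  using assms(2,3)
proof (induction arbitrary: v)
  case (gen a) then show ?case using assms(1) by blast
next
  case (add a b) then show ?case by (simp add: l2_add)
next
  case (smult a c) then show ?case by (simp add: l2_smult)
next
  case (mult a b) then show ?case by simp
qed

abbreviation "Sgen x1 \<equiv> {shiftU, shiftUadj} \<union> multM x1 ` {f. continuous_on UNIV f}"

lemma Sgen_l2:
  assumes "compact (UNIV :: 'g::{topological_ab_group_add,t2_space} set)" "s \<in> alg_gen (Sgen (x1::'g))" "l2 v"
  shows "l2 (s v)"
proof (rule alg_gen_l2[OF _ assms(2,3)])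
  fix s v assume s: "s \<in> Sgen x1" and v: "l2 v"
  show "l2 (s v)"
  proof (cases "s = shiftU \<or> s = shiftUadj")
    case True then show ?thesis using v l2_shiftU l2_shiftUadj by auto
  next
    case False
    then obtain f where f: "continuous_on UNIV f" "s = multM x1 f" using s by auto
    then obtain B where "\<forall>y. cmod (f y) \<le> B" using cont_bounded[OF assms(1)] by blast
    then show ?thesis using l2_multM v f by blast
  qed
qed

lemma Sgen_linop: "s \<in> alg_gen (Sgen x1) \<Longrightarrow> linop s"
proof (rule alg_gen_linop)
  fix t assume "t \<in> Sgen x1"
  then consider "t = shiftU" | "t = shiftUadj" | f where "t = multM x1 f" by blast
  then show "linop t" by cases (simp_all only: linop_shiftU linop_shiftUadj linop_multM)
qed

lemma small_imp_zero: assumes "\<And>e. e > 0 \<Longrightarrow> x \<le> e * R" "R \<ge> 0" shows "x \<le> (0::real)"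
proof (rule ccontr)
  assume "\<not> x \<le> 0"
  then have x: "x > 0" by simp
  have "x \<le> (x / (R + 1)) * R" using assms(1)[of "x / (R+1)"] x assms(2) by simp
  also have "\<dots> < x" using x assms(2) by (simp add: field_simps)
  finally show False by simp
qed

lemma Aalg_linear:
  assumes G: "compact (UNIV :: 'g::{topological_ab_group_add,t2_space} set)"
    and T: "T \<in> Aalg (x1::'g)" and v: "l2 v" and w: "l2 w"
  shows "T (\<lambda>k. v k + c * w k) = (\<lambda>k. T v k + c * T w k)"
proof
  fix k
  define vv where "vv = (\<lambda>k. v k + c * w k)"
  have vv: "l2 vv" unfolding vv_def using v w by (simp add: l2_add l2_smult)
  have bT: "bounded_op T" using T by (simp add: Aalg_def)
  define R where "R = l2norm vv + l2norm v + cmod c * l2norm w"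
  have R0: "R \<ge> 0" unfolding R_def using vv v w l2norm_nonneg by simp
  have "cmod (T vv k - T v k - c * T w k) \<le> 0"
  proof (rule small_imp_zero[OF _ R0])
    fix e :: real assume e: "e > 0"
    obtain S where S: "S \<in> alg_gen (Sgen x1)"
      and Sb: "\<And>u. l2 u \<Longrightarrow> l2norm (\<lambda>k. T u k - S u k) \<le> e * l2norm u"
      using T e unfolding Aalg_def by blast
    have lS: "linop S" using S Sgen_linop by blast
    have Svv: "S vv k = S v k + c * S w k" unfolding vv_def
      using linop_add[OF lS, of v "\<lambda>k. c * w k"] linop_smult[OF lS, of c w] by simp
    have cb: "cmod (T u k - S u k) \<le> e * l2norm u" if "l2 u" for u
    proof -
      have "l2 (\<lambda>k. T u k - S u k)" using that bT Sgen_l2[OF G S] l2_diff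
        unfolding bounded_op_def by blast
      then have "cmod (T u k - S u k) \<le> l2norm (\<lambda>k. T u k - S u k)" using l2_coord by fastforce
      then show ?thesis using Sb[OF that] by simp
    qed
    have eq: "T vv k - T v k - c * T w k = (T vv k - S vv k) - (T v k - S v k) - c * (T w k - S w k)"
      using Svv by (simp add: algebra_simps)
    have "cmod (T vv k - T v k - c * T w k) \<le> cmod (T vv k - S vv k) + cmod (T v k - S v k) + cmod c * cmod (T w k - S w k)"
    proof -
      have "cmod ((T vv k - S vv k) - (T v k - S v k) - c * (T w k - S w k)) \<le>
         cmod ((T vv k - S vv k) - (T v k - S v k)) + cmod (c * (T w k - S w k))"
        by (rule norm_triangle_ineq4)
      also have "cmod ((T vv k - S vv k) - (T v k - S v k)) \<le> cmod (T vv k - S vv k) + cmod (T v k - S v k)"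
        by (rule norm_triangle_ineq4)
      finally show ?thesis unfolding eq by (simp add: norm_mult)
    qed
    also have "\<dots> \<le> e * l2norm vv + e * l2norm v + cmod c * (e * l2norm w)"
      using cb vv v w by (intro add_mono mult_left_mono) auto
    also have "\<dots> = e * R" unfolding R_def by (simp add: algebra_simps)
    finally show "cmod (T vv k - T v k - c * T w k) \<le> e * R" .
  qed
  then show "T (\<lambda>k. v k + c * w k) k = T v k + c * T w k" unfolding vv_def[symmetric]
    by (simp add: algebra_simps)
qed

lemma exp_int_2pi: "exp (\<i> * of_real (of_int p * (2 * pi))) = 1"
proof -
  have "exp (\<i> * of_real (of_int p * (2 * pi))) = cis (2 * pi * of_int p)"
    by (simp add: cis_conv_exp mult_ac)
  also have "\<dots> = 1" by (rule cis_multiple_2pi) simp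
  finally show ?thesis .
qed

lemma integral_exp_int:
  "((\<lambda>\<theta>. exp (\<i> * of_real (of_int p * \<theta>))) has_integral (if p = 0 then 2 * pi else 0)) {0..2*pi}"
proof (cases "p = 0")
  case True
  then show ?thesis using has_integral_const_real[of "1::complex" 0 "2*pi"]
    by (simp add: content_real scaleR_conv_of_real)
next
  case False
  define A where "A = \<i> * of_int p"
  have A0: "A \<noteq> 0" using False by (simp add: A_def)
  have eq: "exp (\<i> * of_real (of_int p * \<theta>)) = exp (\<theta> *\<^sub>R A)" for \<theta>
    by (simp add: A_def scaleR_conv_of_real mult_ac)
  have d: "((\<lambda>t. exp (t *\<^sub>R A) * inverse A) has_vector_derivative exp (\<theta> *\<^sub>R A)) (at \<theta> within {0..2*pi})" for \<theta>
    using has_vector_derivative_mult_left[OF exp_scaleR_has_vector_derivative_right[of A \<theta> "{0..2*pi}"], of "inverse A"]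
    using A0 by (simp add: mult.assoc)
  have "((\<lambda>\<theta>. exp (\<theta> *\<^sub>R A)) has_integral (exp ((2*pi) *\<^sub>R A) * inverse A - exp (0 *\<^sub>R A) * inverse A)) {0..2*pi}"
    by (rule fundamental_theorem_of_calculus[OF _ d]) simp
  moreover have "exp ((2*pi) *\<^sub>R A) = 1" using exp_int_2pi[of p] eq[of "2*pi"] by simp
  ultimately have "((\<lambda>\<theta>. exp (\<theta> *\<^sub>R A)) has_integral 0) {0..2*pi}" by simp
  then show ?thesis using False unfolding eq[symmetric] by simp
qed

lemma sq_sum_bound:
  assumes "finite P"
  shows "(cmod (\<Sum>p\<in>P. if c p then z p k else 0))\<^sup>2 \<le> real (card P) * (\<Sum>p\<in>P. (cmod (z p k))\<^sup>2)"
proof -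
  define f where "f p = cmod (if c p then z p k else 0)" for p
  have "cmod (\<Sum>p\<in>P. if c p then z p k else 0) \<le> (\<Sum>p\<in>P. f p)"
    unfolding f_def by (rule norm_sum)
  then have "(cmod (\<Sum>p\<in>P. if c p then z p k else 0))\<^sup>2 \<le> (\<Sum>p\<in>P. f p)\<^sup>2"
    by (rule power_mono) simp
  also have "\<dots> \<le> (\<Sum>p\<in>P. (f p)\<^sup>2) * real (card P)" by (rule sum_squared_le_sum_of_squares)
  also have "\<dots> \<le> (\<Sum>p\<in>P. (cmod (z p k))\<^sup>2) * real (card P)"
    by (intro mult_right_mono sum_mono) (auto simp: f_def)
  finally show ?thesis by (simp add: mult.commute)
qed

lemma l2norm_le_sqrt: "l2norm v = sqrt (\<Sum>k. (cmod (v k))\<^sup>2)" by (simp add: l2norm_def)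

lemma abstract_conv:
  fixes z :: "'p \<Rightarrow> vec" and deg :: "'p \<Rightarrow> int"
  assumes P: "finite P" and zl2: "\<And>p. p \<in> P \<Longrightarrow> l2 (z p)"
  defines "fc \<equiv> (\<lambda>n k. \<Sum>p\<in>P. if n = int k - deg p then z p k else 0)"
  defines "D \<equiv> (\<lambda>k. \<Sum>p\<in>P. z p k)"
  shows "(\<forall>n. l2 (fc n)) \<and> (\<lambda>N::nat. l2norm (\<lambda>k. (\<Sum>n\<in>{-int N..int N}. fc n k) - D k)) \<longlonglongrightarrow> 0"
proof -
  define g where "g k = real (card P) * (\<Sum>p\<in>P. (cmod (z p k))\<^sup>2)" for k
  have gs: "summable g" unfolding g_def
    using zl2 unfolding l2_def by (intro summable_mult summable_sum) auto
  have gb: "(cmod (\<Sum>p\<in>P. if c p then z p k else 0))\<^sup>2 \<le> g k" for c k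
    unfolding g_def by (rule sq_sum_bound[OF P])
  have l2b: "l2 u" if "\<And>k. (cmod (u k))\<^sup>2 \<le> g k" for u
    unfolding l2_def by (rule summable_comparison_test'[OF gs, of 0]) (use that in simp)
  have part1: "l2 (fc n)" for n
    by (rule l2b) (simp add: fc_def gb)
  obtain M :: nat where M: "\<And>p. p \<in> P \<Longrightarrow> \<bar>deg p\<bar> \<le> int M"
  proof -
    have "finite ((\<lambda>p. nat \<bar>deg p\<bar>) ` P)" using P by simp
    then obtain M where "\<forall>y\<in>(\<lambda>p. nat \<bar>deg p\<bar>) ` P. y \<le> M"
      using finite_nat_set_iff_bounded_le by blast
    then show ?thesis using that[of M] by fastforce
  qed
  define diff where "diff N k = (\<Sum>n\<in>{-int N..int N}. fc n k) - D k" for N k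
  have diff_eq: "diff N k = - (\<Sum>p\<in>P. if \<not> (int k - deg p \<in> {-int N..int N}) then z p k else 0)" for N k
  proof -
    have "(\<Sum>n\<in>{-int N..int N}. fc n k) = (\<Sum>p\<in>P. \<Sum>n\<in>{-int N..int N}. if n = int k - deg p then z p k else 0)"
      unfolding fc_def by (rule sum.swap)
    also have "\<dots> = (\<Sum>p\<in>P. if int k - deg p \<in> {-int N..int N} then z p k else 0)"
      by (intro sum.cong refl) (simp add: sum.delta)
    finally have "(\<Sum>n\<in>{-int N..int N}. fc n k) = (\<Sum>p\<in>P. if int k - deg p \<in> {-int N..int N} then z p k else 0)" .
    moreover have "D k = (\<Sum>p\<in>P. if int k - deg p \<in> {-int N..int N} then z p k else 0)
                       + (\<Sum>p\<in>P. if \<not> (int k - deg p \<in> {-int N..int N}) then z p k else 0)"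
      unfolding D_def sum.distrib[symmetric] by (intro sum.cong refl) simp
    ultimately show ?thesis unfolding diff_def by simp
  qed
  have diffb: "(cmod (diff N k))\<^sup>2 \<le> g k" for N k
    unfolding diff_eq norm_minus_cancel by (rule gb)
  have diff0: "diff N k = 0" if "k + M \<le> N" for N k
  proof -
    have "int k - deg p \<in> {-int N..int N}" if "p \<in> P" for p
      using M[OF that] \<open>k + M \<le> N\<close> by auto
    then have "(\<Sum>p\<in>P. if \<not> (int k - deg p \<in> {-int N..int N}) then z p k else 0) = 0"
      by (intro sum.neutral) auto
    then show ?thesis unfolding diff_eq by simp
  qed
  have hsN: "summable (\<lambda>k. (cmod (diff N k))\<^sup>2)" for N
    by (rule summable_comparison_test'[OF gs, of 0]) (simp add: diffb)
  define tail where "tail s = (\<Sum>k. g (k + s))" for s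
  have tail0: "tail \<longlonglongrightarrow> 0" unfolding tail_def by (rule suminf_exist_split2[OF gs])
  have tailM: "(\<lambda>N. tail (N + 1 - M)) \<longlonglongrightarrow> 0"
  proof (rule LIMSEQ_offset[where k=M])
    have "(\<lambda>n. tail (n + 1)) \<longlonglongrightarrow> 0" by (rule LIMSEQ_ignore_initial_segment[OF tail0])
    then show "(\<lambda>n. tail (n + M + 1 - M)) \<longlonglongrightarrow> 0" by simp
  qed
  have bound: "l2norm (diff N) \<le> sqrt (tail (N + 1 - M))" for N
  proof -
    define s where "s = N + 1 - M"
    have hs: "summable (\<lambda>k. (cmod (diff N k))\<^sup>2)" by (rule hsN)
    have z: "(cmod (diff N k))\<^sup>2 = 0" if "k < s" for k
      using diff0[of k N] that unfolding s_def by simp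
    have "(\<Sum>k. (cmod (diff N k))\<^sup>2) = (\<Sum>k. (cmod (diff N (k + s)))\<^sup>2) + (\<Sum>k<s. (cmod (diff N k))\<^sup>2)"
      by (rule suminf_split_initial_segment[OF hs])
    also have "(\<Sum>k<s. (cmod (diff N k))\<^sup>2) = 0" using z by simp
    also have "(\<Sum>k. (cmod (diff N (k + s)))\<^sup>2) \<le> tail s"
      unfolding tail_def
      by (rule suminf_le) (simp_all add: diffb summable_ignore_initial_segment[OF hs] summable_ignore_initial_segment[OF gs] gs del: power2_eq_square)
    finally show ?thesis unfolding l2norm_def s_def by simp
  qed
  have "(\<lambda>N. l2norm (diff N)) \<longlonglongrightarrow> 0"
  proof (rule tendsto_sandwich[where f="\<lambda>_. 0" and h="\<lambda>N. sqrt (tail (N + 1 - M))"])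
    show "\<forall>\<^sub>F N in sequentially. 0 \<le> l2norm (diff N)"
      using hsN by (simp add: l2norm_def suminf_nonneg)
    show "\<forall>\<^sub>F N in sequentially. l2norm (diff N) \<le> sqrt (tail (N + 1 - M))"
      using bound by simp
    show "(\<lambda>N. sqrt (tail (N + 1 - M))) \<longlonglongrightarrow> 0"
      using tendsto_real_sqrt[OF tailM] by simp
  qed simp
  then show ?thesis using part1 unfolding diff_def by simp
qed

definition ev :: "nat \<Rightarrow> vec" where "ev j = (\<lambda>k. if k = j then 1 else 0)"

lemma fs_l2: "finite S \<Longrightarrow> (\<And>k. k \<notin> S \<Longrightarrow> u k = 0) \<Longrightarrow> l2 u"
  unfolding l2_def by (rule summable_finite[of S]) auto

lemma ev_l2: "l2 (ev j)" by (rule fs_l2[of "{j}"]) (auto simp: ev_def)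

lemma lin_expand:
  assumes lin: "\<And>v w c. l2 v \<Longrightarrow> l2 w \<Longrightarrow> T (\<lambda>k. v k + c * w k) = (\<lambda>k. T v k + c * T w k)"
    and S: "finite S"
  shows "T (\<lambda>k. \<Sum>j\<in>S. c j * ev j k) = (\<lambda>k. \<Sum>j\<in>S. c j * T (ev j) k)"
  using S
proof (induction S rule: finite_induct)
  case empty
  have l0: "l2 (\<lambda>k. 0)" by (rule fs_l2[of "{}"]) auto
  have "T (\<lambda>k. 0 + 1 * 0) = (\<lambda>k. T (\<lambda>k. 0) k + 1 * T (\<lambda>k. 0) k)" by (rule lin[OF l0 l0])
  then have "T (\<lambda>k. 0) k = T (\<lambda>k. 0) k + T (\<lambda>k. 0) k" for k by (simp add: fun_eq_iff)
  then show ?case by (simp add: fun_eq_iff)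
next
  case (insert i F)
  have l1: "l2 (\<lambda>k. \<Sum>j\<in>F. c j * ev j k)"
    by (rule fs_l2[OF insert(1)]) (auto simp: ev_def intro!: sum.neutral)
  have "T (\<lambda>k. \<Sum>j\<in>insert i F. c j * ev j k) = T (\<lambda>k. (\<Sum>j\<in>F. c j * ev j k) + c i * ev i k)"
    using insert by (simp add: add.commute)
  also have "\<dots> = (\<lambda>k. T (\<lambda>k. \<Sum>j\<in>F. c j * ev j k) k + c i * T (ev i) k)"
    by (rule lin[OF l1 ev_l2])
  finally show ?case using insert by (simp add: add.commute)
qed

lemma vec_expand:
  assumes "finite S" "\<And>k. k \<notin> S \<Longrightarrow> u k = 0"
  shows "u = (\<lambda>k. \<Sum>j\<in>S. u j * ev j k)"
proof
  fix k
  have "(\<Sum>j\<in>S. u j * ev j k) = (\<Sum>j\<in>S. if k = j then u j else 0)"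
    by (intro sum.cong refl) (simp add: ev_def)
  also have "\<dots> = u k" using assms by (simp add: sum.delta)
  finally show "u k = (\<Sum>j\<in>S. u j * ev j k)" by simp
qed

abbreviation "Gen x1 \<equiv> {shiftU, shiftUadj} \<union> multM x1 ` characters"

lemma Gen_lin: "s \<in> Gen x1 \<Longrightarrow> linop s"
proof -
  assume "s \<in> Gen x1"
  then consider "s = shiftU" | "s = shiftUadj" | f where "s = multM x1 f" by blast
  then show "linop s" by cases (simp_all only: linop_shiftU linop_shiftUadj linop_multM)
qed

lemma Gen_deg: "s \<in> Gen x1 \<Longrightarrow> \<exists>m. hom m s"
proof -
  assume "s \<in> Gen x1"
  then consider "s = shiftU" | "s = shiftUadj" | f where "s = multM x1 f" by blast
  then show "\<exists>m. hom m s" by cases (use hom_shiftU hom_shiftUadj hom_multM in blast)+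
qed

lemma dsum:
  assumes der: "is_derivation x1 d" and I: "finite I"
  shows "(\<forall>i\<in>I. b i \<in> Acal x1) \<longrightarrow> (\<lambda>v k. \<Sum>i\<in>I. c i * b i v k) \<in> Acal x1 \<and>
     (\<forall>w. l2 w \<longrightarrow> d (\<lambda>v k. \<Sum>i\<in>I. c i * b i v k) w = (\<lambda>k. \<Sum>i\<in>I. c i * d (b i) w k))"
  using I
proof (induction I rule: finite_induct)
  case empty
  have sU: "shiftU \<in> Acal x1" unfolding Acal_def by (rule alg_gen.gen) simp
  have z1: "(\<lambda>v k. (0::complex) * shiftU v k) \<in> Acal x1" using sU unfolding Acal_def by (rule alg_gen.smult)
  have z2: "(\<lambda>v k. (0::complex) * shiftU v k) = (\<lambda>v k. 0)" by simp
  have "d (\<lambda>v k. (0::complex) * shiftU v k) w = (\<lambda>k. 0 * d shiftU w k)" if "l2 w" for w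
    using der sU that unfolding is_derivation_def by blast
  then show ?case using z1 unfolding z2 by simp
next
  case (insert i F)
  show ?case
  proof
    assume h: "\<forall>j\<in>insert i F. b j \<in> Acal x1"
    define A where "A = (\<lambda>v k. c i * b i v k)"
    define B where "B = (\<lambda>v k. \<Sum>j\<in>F. c j * b j v k)"
    have eq: "(\<lambda>v k. \<Sum>j\<in>insert i F. c j * b j v k) = (\<lambda>v k. A v k + B v k)"
      using insert(1,2) by (simp add: A_def B_def)
    have B: "B \<in> Acal x1" "\<And>w. l2 w \<Longrightarrow> d B w = (\<lambda>k. \<Sum>j\<in>F. c j * d (b j) w k)"
      using insert(3) h unfolding B_def by auto
    have A: "A \<in> Acal x1" unfolding A_def Acal_def
      by (rule alg_gen.smult) (use h in \<open>simp add: Acal_def\<close>)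
    have dA: "d A w = (\<lambda>k. c i * d (b i) w k)" if "l2 w" for w
      using der h that unfolding is_derivation_def A_def by blast
    have dAB: "d (\<lambda>v k. A v k + B v k) w = (\<lambda>k. d A w k + d B w k)" if "l2 w" for w
      using der A B(1) that unfolding is_derivation_def by blast
    have mem: "(\<lambda>v k. A v k + B v k) \<in> Acal x1" using A B(1) unfolding Acal_def by (rule alg_gen.add)
    show "(\<lambda>v k. \<Sum>j\<in>insert i F. c j * b j v k) \<in> Acal x1 \<and>
      (\<forall>w. l2 w \<longrightarrow> d (\<lambda>v k. \<Sum>j\<in>insert i F. c j * b j v k) w = (\<lambda>k. \<Sum>j\<in>insert i F. c j * d (b j) w k))"
      unfolding eq using mem dAB dA B(2) insert(1,2) by simp
  qed
qed

lemma exp_combine: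
  "exp (\<i> * of_real (of_int n * \<theta>)) * exp (\<i> * of_real (- \<theta> * real k)) *
   (exp (\<i> * of_real (of_int m * \<theta>)) * exp (\<i> * of_real (\<theta> * real j)))
   = exp (\<i> * of_real (of_int (n + m + int j - int k) * \<theta>))"
proof -
  have "\<i> * of_real (of_int (n + m + int j - int k) * \<theta>) =
     (\<i> * of_real (of_int n * \<theta>) + \<i> * of_real (- \<theta> * real k)) +
     (\<i> * of_real (of_int m * \<theta>) + \<i> * of_real (\<theta> * real j))"
    by (simp add: algebra_simps)
  then show ?thesis by (subst \<open>_ = _\<close>) (simp only: exp_add)
qed

theorem proposition3p9:
  fixes x1 :: "'g::{topological_ab_group_add,t2_space}"
    and d :: "op \<Rightarrow> op" and a :: op and x :: vec
  assumes "compact (UNIV :: 'g set)"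
    and "infinite (UNIV :: 'g set)"
    and "closure {z. \<exists>m::int. z = zmul m x1} = UNIV"
    and "is_derivation x1 d"
    and "a \<in> Acal x1"
    and "fin_supp x"
  shows "(\<forall>n. l2 (fourier_comp d n a x)) \<and>
         (\<lambda>N::nat. l2norm (\<lambda>k. (\<Sum>n\<in>{-int N..int N}. fourier_comp d n a x k) - d a x k))
           \<longlonglongrightarrow> 0"
proof -
  note G = assms(1) and der = assms(4) and aA = assms(5)
  have "\<exists>L. (\<forall>p\<in>set L. snd p \<in> alg_gen (Gen x1) \<and> hom (fst p) (snd p)) \<and> a = (\<lambda>v k. \<Sum>p\<leftarrow>L. snd p v k)"
  proof (rule decomp[where S="Gen x1"])
    show "\<And>s. s \<in> Gen x1 \<Longrightarrow> linop s" by (rule Gen_lin)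
    show "\<And>s. s \<in> Gen x1 \<Longrightarrow> \<exists>m. hom m s" by (rule Gen_deg)
    show "a \<in> alg_gen (Gen x1)" using aA unfolding Acal_def .
  qed
  then obtain L where L: "\<forall>p\<in>set L. snd p \<in> Acal x1 \<and> hom (fst p) (snd p)"
    and aL: "a = (\<lambda>v k. \<Sum>p\<leftarrow>L. snd p v k)" unfolding Acal_def by blast
  define n0 where "n0 = length L"
  define m where "m i = fst (L ! i)" for i
  define b where "b i = snd (L ! i)" for i
  have bA: "b i \<in> Acal x1" and hb: "hom (m i) (b i)" if "i < n0" for i
    using L that nth_mem[of i L] unfolding n0_def m_def b_def by auto
  have a_eq: "a = (\<lambda>v k. \<Sum>i<n0. b i v k)"
    unfolding aL n0_def b_def by (simp add: sum_list_sum_nth atLeast0LessThan)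
  define Sx where "Sx = {k. x k \<noteq> 0}"
  have Sx: "finite Sx" using assms(6) unfolding fin_supp_def Sx_def .
  define Db where "Db i j = d (b i) (ev j)" for i j
  have dbA: "d (b i) \<in> Aalg x1" if "i < n0" for i
    using der bA[OF that] unfolding is_derivation_def by blast
  have expand: "d (b i) (\<lambda>k. \<Sum>j\<in>Sx. c j * ev j k) = (\<lambda>k. \<Sum>j\<in>Sx. c j * Db i j k)" if "i < n0" for i c
    unfolding Db_def by (rule lin_expand[OF Aalg_linear[OF G dbA[OF that]] Sx])
  have x_exp: "x = (\<lambda>k. \<Sum>j\<in>Sx. x j * ev j k)" by (rule vec_expand[OF Sx]) (simp add: Sx_def)
  have xK_exp: "expK \<theta> x = (\<lambda>k. \<Sum>j\<in>Sx. (exp (\<i> * of_real (\<theta> * real j)) * x j) * ev j k)" for \<theta>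
  proof -
    have "expK \<theta> x = (\<lambda>k. \<Sum>j\<in>Sx. expK \<theta> x j * ev j k)" by (rule vec_expand[OF Sx]) (simp add: Sx_def expK_def)
    then show ?thesis by (simp add: expK_def)
  qed
  have xK_l2: "l2 (expK \<theta> x)" for \<theta> by (rule fs_l2[OF Sx]) (simp add: Sx_def expK_def)
  have x_l2: "l2 x" by (rule fs_l2[OF Sx]) (simp add: Sx_def)
  have rho_a: "rho \<theta> a = (\<lambda>v k. \<Sum>i<n0. exp (\<i> * of_real (of_int (m i) * \<theta>)) * b i v k)" for \<theta>
  proof (intro ext)
    fix v k
    have "rho \<theta> a v k = (\<Sum>i<n0. exp (\<i> * of_real (\<theta> * real k)) * b i (expK (-\<theta>) v) k)"
      unfolding a_eq by (simp add: rho_def expK_def sum_distrib_left)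
    also have "\<dots> = (\<Sum>i<n0. rho \<theta> (b i) v k)"
      by (simp add: rho_def expK_def)
    also have "\<dots> = (\<Sum>i<n0. exp (\<i> * of_real (of_int (m i) * \<theta>)) * b i v k)"
    proof (rule sum.cong[OF refl])
      fix i assume "i \<in> {..<n0}"
      then have "hom (m i) (b i)" using hb by simp
      then show "rho \<theta> (b i) v k = exp (\<i> * of_real (of_int (m i) * \<theta>)) * b i v k"
        unfolding hom_def by metis
    qed
    finally show "rho \<theta> a v k = (\<Sum>i<n0. exp (\<i> * of_real (of_int (m i) * \<theta>)) * b i v k)" .
  qed
  have drho: "d (rho \<theta> a) w = (\<lambda>k. \<Sum>i<n0. exp (\<i> * of_real (of_int (m i) * \<theta>)) * d (b i) w k)" if "l2 w" for \<theta> w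
    using dsum[OF der, of "{..<n0}" b "\<lambda>i. exp (\<i> * of_real (of_int (m i) * \<theta>))"] bA that
    unfolding rho_a by simp
  have integrand: "exp (\<i> * of_real (of_int n * \<theta>)) * rho (-\<theta>) (d (rho \<theta> a)) x k =
      (\<Sum>i<n0. \<Sum>j\<in>Sx. (x j * Db i j k) * exp (\<i> * of_real (of_int (n + m i + int j - int k) * \<theta>)))" for n \<theta> k
  proof -
    have "rho (-\<theta>) (d (rho \<theta> a)) x k = exp (\<i> * of_real (- \<theta> * real k)) * d (rho \<theta> a) (expK \<theta> x) k"
      by (simp add: rho_def expK_def)
    also have "d (rho \<theta> a) (expK \<theta> x) k = (\<Sum>i<n0. exp (\<i> * of_real (of_int (m i) * \<theta>)) * d (b i) (expK \<theta> x) k)"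
      using drho[OF xK_l2] by simp
    also have "\<dots> = (\<Sum>i<n0. exp (\<i> * of_real (of_int (m i) * \<theta>)) * (\<Sum>j\<in>Sx. (exp (\<i> * of_real (\<theta> * real j)) * x j) * Db i j k))"
    proof (rule sum.cong[OF refl])
      fix i assume "i \<in> {..<n0}"
      then show "exp (\<i> * of_real (of_int (m i) * \<theta>)) * d (b i) (expK \<theta> x) k =
          exp (\<i> * of_real (of_int (m i) * \<theta>)) * (\<Sum>j\<in>Sx. (exp (\<i> * of_real (\<theta> * real j)) * x j) * Db i j k)"
        unfolding xK_exp using expand[of i] by simp
    qed
    finally have "exp (\<i> * of_real (of_int n * \<theta>)) * rho (-\<theta>) (d (rho \<theta> a)) x k =
       (\<Sum>i<n0. \<Sum>j\<in>Sx. (x j * Db i j k) * (exp (\<i> * of_real (of_int n * \<theta>)) * exp (\<i> * of_real (- \<theta> * real k)) *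
         (exp (\<i> * of_real (of_int (m i) * \<theta>)) * exp (\<i> * of_real (\<theta> * real j)))))"
      by (simp add: sum_distrib_left mult_ac)
    then show ?thesis by (simp only: exp_combine)
  qed
  have fc1: "fourier_comp d n a x k = (\<Sum>i<n0. \<Sum>j\<in>Sx. if n + m i + int j - int k = 0 then x j * Db i j k else 0)" for n k
  proof -
    have "((\<lambda>\<theta>. \<Sum>i<n0. \<Sum>j\<in>Sx. (x j * Db i j k) * exp (\<i> * of_real (of_int (n + m i + int j - int k) * \<theta>)))
       has_integral (\<Sum>i<n0. \<Sum>j\<in>Sx. (x j * Db i j k) * (if n + m i + int j - int k = 0 then 2 * pi else 0))) {0..2*pi}"
      by (intro has_integral_sum has_integral_mult_right integral_exp_int finite_lessThan Sx)
    then have "integral {0..2*pi} (\<lambda>\<theta>. exp (\<i> * of_real (of_int n * \<theta>)) * rho (-\<theta>) (d (rho \<theta> a)) x k)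
       = (\<Sum>i<n0. \<Sum>j\<in>Sx. (x j * Db i j k) * (if n + m i + int j - int k = 0 then 2 * pi else 0))"
      unfolding integrand by (rule integral_unique)
    then show ?thesis unfolding fourier_comp_def
      apply (simp add: sum_distrib_left)
      apply (intro sum.cong refl)
      apply (auto simp: field_simps)
      done
  qed
  define P where "P = {..<n0} \<times> Sx"
  define z where "z p = (\<lambda>k. x (snd p) * Db (fst p) (snd p) k)" for p
  define deg where "deg p = m (fst p) + int (snd p)" for p
  have P: "finite P" unfolding P_def using Sx by simp
  have zl2: "l2 (z p)" if "p \<in> P" for p
  proof -
    have "fst p < n0" using that unfolding P_def by auto
    then have "bounded_op (d (b (fst p)))" using dbA unfolding Aalg_def by blast
    then have "l2 (Db (fst p) (snd p))" unfolding Db_def bounded_op_def using ev_l2 by blast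
    then show ?thesis unfolding z_def by (rule l2_smult)
  qed
  have fc_eq: "fourier_comp d n a x = (\<lambda>k. \<Sum>p\<in>P. if n = int k - deg p then z p k else 0)" for n
  proof
    fix k
    have "fourier_comp d n a x k = (\<Sum>i<n0. \<Sum>j\<in>Sx. if n = int k - deg (i, j) then z (i, j) k else 0)"
      unfolding fc1 deg_def z_def by (intro sum.cong refl) auto
    also have "\<dots> = (\<Sum>p\<in>P. if n = int k - deg p then z p k else 0)"
      unfolding P_def sum.cartesian_product by (rule sum.cong[OF refl]) (simp split: prod.split)
    finally show "fourier_comp d n a x k = (\<Sum>p\<in>P. if n = int k - deg p then z p k else 0)" .
  qed
  have D_eq: "d a x = (\<lambda>k. \<Sum>p\<in>P. z p k)"
  proof
    fix k
    have a1: "a = (\<lambda>v k. \<Sum>i<n0. 1 * b i v k)" unfolding a_eq by simp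
    have "d a x k = (\<Sum>i<n0. 1 * d (b i) x k)"
      using dsum[OF der, of "{..<n0}" b "\<lambda>i. 1"] bA x_l2 unfolding a1[symmetric] by simp
    also have "\<dots> = (\<Sum>i<n0. \<Sum>j\<in>Sx. z (i, j) k)"
    proof (rule sum.cong[OF refl])
      fix i assume "i \<in> {..<n0}"
      then have i: "i < n0" by simp
      have "d (b i) x = d (b i) (\<lambda>k. \<Sum>j\<in>Sx. x j * ev j k)" using arg_cong[OF x_exp, of "d (b i)"] .
      also have "\<dots> = (\<lambda>k. \<Sum>j\<in>Sx. x j * Db i j k)" by (rule expand[OF i])
      finally show "1 * d (b i) x k = (\<Sum>j\<in>Sx. z (i, j) k)" unfolding z_def by simp
    qed
    also have "\<dots> = (\<Sum>p\<in>P. z p k)"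
      unfolding P_def sum.cartesian_product by (simp add: split_def)
    finally show "d a x k = (\<Sum>p\<in>P. z p k)" .
  qed
  show ?thesis
    unfolding fc_eq D_eq using abstract_conv[OF P zl2, where deg=deg] by simp
qed

end
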